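(* Under Friends Appreciation, in every partition $\pi$ that maximizes the egalitarian welfare, every agent $i$ with $|F_i|=f_{\min}$ satisfies $F_i\subseteq \pi(i)$, i.e., is in the same coalition as all of her friends.
   Context: A friends-and-enemies instance consists of a set of agents $\mathcal{N}=\{1,\dots,n\}$ and, for each agent $i$, a set of friends $F_i\subseteq \mathcal{N}\setminus\{i\}$; the enemies of $i$ are $E_i=\mathcal{N}\setminus(F_i\cup\{i\})$. An outcome is a partition $\pi$ of $\mathcal{N}$; $\pi(i)$ is the coalition containing $i$. Under Friends Appreciation, $u_i(C)=|C\cap F_i|-\frac{1}{n}|C\cap E_i|$ for $C\ni i$, $u_i(\pi)=u_i(\pi(i))$, and $\mathsf{ESW}(\pi)=\min_i u_i(\pi)$. Here $f_{\min}=\min_{i\in\mathcal{N}}|F_i|$. *)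

theory Defs
  imports Complex_Main "HOL-Library.Disjoint_Sets"
begin

definition agents :: "nat \<Rightarrow> nat set" where
  "agents n = {1..n}"

definition enemies :: "nat \<Rightarrow> (nat \<Rightarrow> nat set) \<Rightarrow> nat \<Rightarrow> nat set" where
  "enemies n F i = agents n - (F i \<union> {i})"

definition coalition :: "nat set set \<Rightarrow> nat \<Rightarrow> nat set" where
  "coalition P i = (THE C. C \<in> P \<and> i \<in> C)"

definition util_FA :: "nat \<Rightarrow> (nat \<Rightarrow> nat set) \<Rightarrow> nat \<Rightarrow> nat set \<Rightarrow> real" where
  "util_FA n F i C = real (card (C \<inter> F i)) - (1 / real n) * real (card (C \<inter> enemies n F i))"

definition ESW :: "nat \<Rightarrow> (nat \<Rightarrow> nat set) \<Rightarrow> nat set set \<Rightarrow> real" where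
  "ESW n F P = Min ((\<lambda>i. util_FA n F i (coalition P i)) ` agents n)"

definition f_min :: "nat \<Rightarrow> (nat \<Rightarrow> nat set) \<Rightarrow> nat" where
  "f_min n F = Min ((\<lambda>i. card (F i)) ` agents n)"

definition max_ESW :: "nat \<Rightarrow> (nat \<Rightarrow> nat set) \<Rightarrow> nat set set \<Rightarrow> bool" where
  "max_ESW n F P \<longleftrightarrow> partition_on (agents n) P \<and>
     (\<forall>P'. partition_on (agents n) P' \<longrightarrow> ESW n F P' \<le> ESW n F P)"

end

theory Submission
  imports Defs
begin

theorem corollary1:
  fixes n :: nat and F :: "nat \<Rightarrow> nat set" and P :: "nat set set"
  assumes friends: "\<And>i. i \<in> agents n \<Longrightarrow> F i \<subseteq> agents n - {i}"
    and opt: "max_ESW n F P"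
  shows "\<forall>i \<in> agents n. card (F i) = f_min n F \<longrightarrow> F i \<subseteq> coalition P i"
proof (intro ballI impI, rule ccontr)
  fix i assume i: "i \<in> agents n" and fi: "card (F i) = f_min n F"
    and nsub: "\<not> F i \<subseteq> coalition P i"
  let ?A = "agents n"
  have finA: "finite ?A" by (simp add: agents_def)
  have ne: "?A \<noteq> {}" using i by auto
  have n1: "n \<ge> 1" using i by (auto simp: agents_def)
  have cA: "card ?A = n" by (simp add: agents_def)
  have part: "partition_on ?A {?A}" using ne by (auto simp: partition_on_def disjoint_def)
  have coalA: "coalition {?A} j = ?A" if "j \<in> ?A" for j
    unfolding coalition_def using that by (rule_tac the_equality) auto
  have fmin: "f_min n F \<le> card (F j)" if "j \<in> ?A" for j
    unfolding f_min_def using finA that by (intro Min_le) auto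
  have ugrand: "real (f_min n F) - 1 < util_FA n F j (coalition {?A} j)" if j: "j \<in> ?A" for j
  proof -
    have "enemies n F j \<subseteq> ?A - {j}" by (auto simp: enemies_def)
    hence "card (enemies n F j) \<le> card (?A - {j})" using finA by (intro card_mono) auto
    also have "\<dots> = n - 1" using j cA finA by simp
    finally have ce: "real (card (?A \<inter> enemies n F j)) \<le> real n - 1"
      using n1 by (simp add: Int_absorb1 enemies_def of_nat_diff)
    have "(1 / real n) * real (card (?A \<inter> enemies n F j)) \<le> (1 / real n) * (real n - 1)"
      using ce by (intro mult_left_mono) auto
    also have "\<dots> < 1" using n1 by (simp add: field_simps)
    finally have e: "(1 / real n) * real (card (?A \<inter> enemies n F j)) < 1" .
    have "?A \<inter> F j = F j" using friends[OF j] by auto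
    thus ?thesis using e fmin[OF j] coalA[OF j] unfolding util_FA_def by simp
  qed
  have "real (f_min n F) - 1 < ESW n F {?A}"
    unfolding ESW_def using finA ne ugrand by (subst Min_gr_iff) auto
  also have "ESW n F {?A} \<le> ESW n F P" using opt part unfolding max_ESW_def by blast
  also have "ESW n F P \<le> util_FA n F i (coalition P i)"
    unfolding ESW_def using finA i by (intro Min_le) auto
  also have "\<dots> \<le> real (card (coalition P i \<inter> F i))"
    unfolding util_FA_def by simp
  also have "\<dots> \<le> real (f_min n F) - 1"
  proof -
    have finF: "finite (F i)" using friends[OF i] finA finite_subset by blast
    have "coalition P i \<inter> F i \<subset> F i" using nsub by auto
    hence "card (coalition P i \<inter> F i) < card (F i)" using finF by (rule psubset_card_mono[rotated])
    thus ?thesis using fi by linarith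
  qed
  finally show False by simp
qed

end
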